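(* Let $Q>0$ and $\Gamma>0$. Let $f$ be a nonnegative random variable with a continuous probability density function, and let $I$ be a nonnegative random variable independent of $f$ with $\mathbb{E}[I]=\Gamma$. Define $$C^{{\rm ER},a}_{\rm PR,CP}=\mathbb{E}\left[\log\left(1+\frac{fQ}{1+I}\right)\right],\qquad C^{{\rm ER},p}_{\rm PR,CP}=\mathbb{E}\left[\log\left(1+\frac{fQ}{1+\Gamma}\right)\right].$$ Then $C^{{\rm ER},a}_{\rm PR,CP}\geq C^{{\rm ER},p}_{\rm PR,CP}$.
   Context: Setting: a primary radio (PR) fading link with channel power gain $f$ and unit-power Gaussian noise, sharing spectrum with a cognitive radio (CR) whose interference power at the PR receiver is $I$. The CR is independent of $f$; $I$ is, e.g., $I=gp$ where $g$ is the CR-to-PR channel power gain and $p$ is the CR transmit power, which depends only on CR-side channel gains independent of $f$. Under the average-interference-power (AIP) constraint with threshold $\Gamma$, the interference is random with $\mathbb{E}[I]=\Gamma$. Under the peak-interference-power (PIP) constraint with threshold $\Gamma$, the interference equals $\Gamma$ in every fading state. The PR uses the constant-power (CP) policy: it transmits with power $Q$ in every fading state, treating interference as Gaussian noise. $C^{{\rm ER},a}_{\rm PR,CP}$ and $C^{{\rm ER},p}_{\rm PR,CP}$ are the resulting PR ergodic capacities in the AIP and PIP cases. *)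

theory Defs
  imports "HOL-Probability.Probability"
begin

end

theory Submission
  imports Defs
begin

lemma ln_ge_one_minus_inv: "(z::real) > 0 \<Longrightarrow> ln z \<ge> 1 - 1/z"
proof -
  assume z: "z > 0"
  have "ln (1/z) \<le> 1/z - 1" using z by (intro ln_le_minus_one) simp
  moreover have "ln (1/z) = - ln z" using z by (simp add: ln_div)
  ultimately show ?thesis by simp
qed

lemma tangent_ineq:
  fixes a i G :: real
  assumes a: "a \<ge> 0" and i: "i \<ge> 0" and G: "G > 0"
  shows "ln (1 + a/(1+i)) \<ge> ln (1 + a/(1+G)) - a/((1+G)*(1+G+a)) * (i - G)"
proof -
  define x where "x = 1 + i"
  define y where "y = 1 + G"
  have x: "x > 0" and y: "y > 0" using i G by (auto simp: x_def y_def)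
  define z where "z = (x+a)*y/(x*(y+a))"
  have z: "z > 0" using x y a by (simp add: z_def)
  have e1: "1 + a/(1+i) = (x+a)/x" using x by (simp add: x_def field_simps)
  have e2: "1 + a/(1+G) = (y+a)/y" using y by (simp add: y_def field_simps)
  have "ln ((x+a)/x) - ln ((y+a)/y) = ln z"
    using x y a by (simp add: z_def ln_div ln_mult)
  also have "\<dots> \<ge> 1 - 1/z" using ln_ge_one_minus_inv[OF z] .
  finally have L: "ln ((x+a)/x) - ln ((y+a)/y) \<ge> 1 - 1/z" .
  have nz: "a*y + x*y \<noteq> 0" using x y a by (smt (verit) mult_nonneg_nonneg mult_pos_pos)
  have "1 - 1/z = a*(y-x)/((x+a)*y)" using x y a nz by (simp add: z_def field_simps)
  moreover have "a*(y-x)/((x+a)*y) - (- a/(y*(y+a)) * (x - y)) = a*(y-x)^2/(y*(x+a)*(y+a))"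
  proof -
    have p1: "x + a > 0" "y + a > 0" using x y a by auto
    have "a*(y-x)*(y+a)/(y*(x+a)*(y+a)) = a*(y-x)/(y*(x+a))"
      using p1 by (intro nonzero_mult_divide_mult_cancel_right) auto
    then have "a*(y-x)/((x+a)*y) = a*(y-x)*(y+a)/(y*(x+a)*(y+a))" by (simp add: mult.commute)
    have "a*(x-y)*(x+a)/(y*(y+a)*(x+a)) = a*(x-y)/(y*(y+a))"
      using p1 by (intro nonzero_mult_divide_mult_cancel_right) auto
    then have "- a/(y*(y+a)) * (x - y) = - a*(x-y)*(x+a)/(y*(x+a)*(y+a))"
      by (simp add: mult.commute mult.left_commute)
    moreover note \<open>a*(y-x)/((x+a)*y) = a*(y-x)*(y+a)/(y*(x+a)*(y+a))\<close>
    ultimately show ?thesis by (simp add: diff_divide_distrib[symmetric] power2_eq_square algebra_simps)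
  qed
  moreover have "a*(y-x)^2/(y*(x+a)*(y+a)) \<ge> 0" using x y a by simp
  ultimately have "ln ((x+a)/x) - ln ((y+a)/y) \<ge> - a/(y*(y+a)) * (x - y)" using L by linarith
  moreover have "x - y = i - G" "y*(y+a) = (1+G)*(1+G+a)" by (simp_all add: x_def y_def)
  ultimately have "ln ((x+a)/x) - ln ((y+a)/y) \<ge> - a/((1+G)*(1+G+a)) * (i - G)" by simp
  then show ?thesis unfolding e1 e2 by simp
qed

theorem theorem4p1:
  fixes M :: "'a measure" and f I :: "'a \<Rightarrow> real" and g :: "real \<Rightarrow> real"
    and Q \<Gamma> :: real
  assumes "prob_space M"
    and "Q > 0" and "\<Gamma> > 0"
    and f_nonneg: "\<forall>x\<in>space M. f x \<ge> 0"
    and f_density: "distributed M lborel f (\<lambda>t. ennreal (g t))"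
    and g_nonneg: "\<forall>t. g t \<ge> 0"
    and g_cont: "continuous_on UNIV g"
    and I_rv: "I \<in> borel_measurable M"
    and I_nonneg: "\<forall>x\<in>space M. I x \<ge> 0"
    and indep: "prob_space.indep_var M borel f borel I"
    and I_int: "integrable M I"
    and I_mean: "prob_space.expectation M I = \<Gamma>"
  shows "prob_space.expectation M (\<lambda>x. ln (1 + f x * Q / (1 + I x)))
         \<ge> prob_space.expectation M (\<lambda>x. ln (1 + f x * Q / (1 + \<Gamma>)))"
proof -
  interpret P: prob_space M by fact
  have Q: "Q > 0" and G: "\<Gamma> > 0" by fact+
  have fm: "f \<in> borel_measurable M" using distributed_measurable[OF f_density] by simp
  define A where "A = (\<lambda>x. ln (1 + f x * Q / (1 + I x)))"
  define B where "B = (\<lambda>x. ln (1 + f x * Q / (1 + \<Gamma>)))"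
  define c where "c = (\<lambda>t::real. t * Q / ((1+\<Gamma>)*(1+\<Gamma>+t*Q)))"
  define C where "C = (\<lambda>x. c (f x) * (I x - \<Gamma>))"
  have Am: "A \<in> borel_measurable M" unfolding A_def using fm I_rv by measurable
  have Bm: "B \<in> borel_measurable M" unfolding B_def using fm by measurable
  have A0: "\<And>x. x \<in> space M \<Longrightarrow> A x \<ge> 0"
    using f_nonneg I_nonneg Q unfolding A_def by auto
  show ?thesis
  proof (cases "integrable M B")
    case False
    then have "integral\<^sup>L M B = 0" by (rule not_integrable_integral_eq)
    moreover have "integral\<^sup>L M A \<ge> 0" using A0 by (intro integral_nonneg_AE AE_I2) auto
    ultimately show ?thesis unfolding A_def B_def by simp
  next
    case True
    have Aint: "integrable M A"
    proof (rule Bochner_Integration.integrable_bound[of _ "\<lambda>x. B x + ln (1+\<Gamma>)"])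
      show "integrable M (\<lambda>x. B x + ln (1+\<Gamma>))" using True by simp
      show "A \<in> borel_measurable M" by fact
      show "AE x in M. norm (A x) \<le> norm (B x + ln (1+\<Gamma>))"
      proof (rule AE_I2)
        fix x assume x: "x \<in> space M"
        have fx: "f x \<ge> 0" and Ix: "I x \<ge> 0" using x f_nonneg I_nonneg by auto
        have fq: "f x * Q \<ge> 0" using fx Q by simp
        have "f x * Q \<le> f x * Q * (1 + I x)" using fq Ix by (simp add: mult_le_cancel_left1 mult_le_cancel_right1)
        then have "f x * Q / (1 + I x) \<le> f x * Q" using Ix by (simp add: divide_le_eq)
        moreover have "f x * Q / (1 + I x) \<ge> 0" using fq Ix by simp
        ultimately have "A x \<le> ln (1 + f x * Q)"
          unfolding A_def by (intro ln_mono) auto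
        also have "\<dots> \<le> ln ((1 + f x * Q / (1 + \<Gamma>)) * (1+\<Gamma>))"
          using fx Q G fq by (intro ln_mono) (auto simp: field_simps add_pos_nonneg)
        also have "\<dots> = B x + ln (1+\<Gamma>)" unfolding B_def
        proof -
          have "f x * Q / (1 + \<Gamma>) \<ge> 0" using fq G by simp
          then show "ln ((1 + f x * Q / (1 + \<Gamma>)) * (1+\<Gamma>)) = ln (1 + f x * Q / (1 + \<Gamma>)) + ln (1+\<Gamma>)"
            using G by (subst ln_mult) auto
        qed
        finally have "A x \<le> B x + ln (1+\<Gamma>)" .
        moreover have "B x \<ge> 0" unfolding B_def using fx Q G by auto
        ultimately show "norm (A x) \<le> norm (B x + ln (1+\<Gamma>))" using A0[OF x] G by simp
      qed
    qed
    have cm: "c \<in> borel_measurable borel" unfolding c_def by measurable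
    have ind2: "P.indep_var borel (c \<circ> f) borel ((\<lambda>t. t - \<Gamma>) \<circ> I)"
      by (rule P.indep_var_compose[OF indep cm]) measurable
    have cfint: "integrable M (\<lambda>x. c (f x))"
    proof (rule Bochner_Integration.integrable_bound[of _ "\<lambda>x. 1::real"])
      show "integrable M (\<lambda>x. 1::real)" by simp
      show "(\<lambda>x. c (f x)) \<in> borel_measurable M" using fm cm by measurable
      show "AE x in M. norm (c (f x)) \<le> norm (1::real)"
      proof (rule AE_I2)
        fix x assume x: "x \<in> space M"
        have fx: "f x \<ge> 0" using x f_nonneg by auto
        have "f x * Q \<le> (1+\<Gamma>)*(1+\<Gamma>+f x * Q)" using fx Q G
          by (simp add: algebra_simps)
        moreover have "(1+\<Gamma>)*(1+\<Gamma>+f x * Q) > 0" using fx Q G by (simp add: add_pos_nonneg)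
        ultimately have "c (f x) \<le> 1" "c (f x) \<ge> 0" unfolding c_def using fx Q G
          by (auto simp: divide_le_eq)
        then show "norm (c (f x)) \<le> norm (1::real)" by simp
      qed
    qed
    have Iint: "integrable M (\<lambda>x. I x - \<Gamma>)" using I_int by simp
    have "integral\<^sup>L M C = integral\<^sup>L M (\<lambda>x. c (f x)) * integral\<^sup>L M (\<lambda>x. I x - \<Gamma>)"
      unfolding C_def using P.indep_var_lebesgue_integral[OF ind2[unfolded comp_def] cfint Iint] .
    moreover have "integral\<^sup>L M (\<lambda>x. I x - \<Gamma>) = 0"
      using I_int I_mean by (simp add: Bochner_Integration.integral_diff P.prob_space)
    ultimately have C0: "integral\<^sup>L M C = 0" by simp
    have Cint: "integrable M C"
      unfolding C_def using P.indep_var_integrable[OF ind2[unfolded comp_def] cfint Iint] .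
    have "integral\<^sup>L M (\<lambda>x. B x - C x) \<le> integral\<^sup>L M A"
    proof (rule integral_mono)
      show "integrable M (\<lambda>x. B x - C x)" using True Cint by simp
      show "integrable M A" by fact
      fix x assume x: "x \<in> space M"
      have fx: "f x \<ge> 0" and Ix: "I x \<ge> 0" using x f_nonneg I_nonneg by auto
      have a: "f x * Q \<ge> 0" using fx Q by simp
      show "B x - C x \<le> A x"
        using tangent_ineq[OF a Ix G] unfolding A_def B_def C_def c_def by simp
    qed
    moreover have "integral\<^sup>L M (\<lambda>x. B x - C x) = integral\<^sup>L M B"
      using True Cint C0 by simp
    ultimately show ?thesis unfolding A_def B_def by simp
  qed
qed

end
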